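(* Let $k\ge1$ be an integer. If $\mathcal S=\{a_1<\cdots<a_m\}\subset\mathbb N$ is a $\mathcal D_k$ set, then, as $m\to\infty$, $$a_m\ \ge\ (1+o(1))\,\frac{(k+1)^m}{2}\sqrt{\frac{6}{m\pi k(k+2)}}.$$ Consequently, for an infinite $\mathcal D_k$ set $\mathcal S\subseteq\mathbb N$, as $n\to\infty$, $$|\mathcal S(n)|\ \le\ \log_{k+1}n+\frac12\log_{k+1}\log_2 n+\frac12\log_{k+1}\left(\frac{2\pi}{3}k(k+2)\right)+o(1),$$ where $\mathcal S(n):=\mathcal S\cap[1,n]$.
   Context: For a positive integer $k$, a set $\mathcal S\subseteq\mathbb N$ is a $\mathcal D_k$ set if any equality $\sum_{s\in\mathcal S}\varepsilon_s s=0$ with $\varepsilon_s\in\{-k,\dots,-1,0,1,\dots,k\}$ (only finitely many nonzero) implies that all $\varepsilon_s$ are $0$. *)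

theory Defs
  imports Complex_Main
begin

definition D_set :: "nat \<Rightarrow> nat set \<Rightarrow> bool" where
  "D_set k S \<longleftrightarrow>
     (\<forall>\<epsilon> :: nat \<Rightarrow> int.
        finite {s \<in> S. \<epsilon> s \<noteq> 0} \<longrightarrow>
        (\<forall>s\<in>S. \<bar>\<epsilon> s\<bar> \<le> int k) \<longrightarrow>
        (\<Sum>s\<in>{s \<in> S. \<epsilon> s \<noteq> 0}. \<epsilon> s * int s) = 0 \<longrightarrow>
        (\<forall>s\<in>S. \<epsilon> s = 0))"

end

theory Submission
  imports Defs "HOL-Library.FuncSet" "HOL-Analysis.Complex_Transcendental"
begin


definition R :: "'a set \<Rightarrow> ('a \<Rightarrow> real) \<Rightarrow> real" where
  "R A f = 2 * real (card A) * (\<Sum>x\<in>A. (f x)^2) - 2 * (\<Sum>x\<in>A. f x)^2"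

lemma Qform:
  assumes "finite A"
  shows "(\<Sum>x\<in>A. \<Sum>y\<in>A. (f x - f y)^2) = R A f"
proof -
  have "(\<Sum>x\<in>A. \<Sum>y\<in>A. (f x - f y)^2) =
     (\<Sum>x\<in>A. \<Sum>y\<in>A. (f x)^2 + (f y)^2 - 2 * f x * f y)"
    by (simp add: power2_diff)
  also have "\<dots> = real (card A) * (\<Sum>x\<in>A. (f x)^2) + real (card A) * (\<Sum>x\<in>A. (f x)^2)
      - 2 * (\<Sum>x\<in>A. f x) * (\<Sum>x\<in>A. f x)"
    by (simp add: sum.distrib sum_subtractf sum_distrib_left[symmetric] sum_product mult.assoc)
  finally show ?thesis unfolding R_def by (simp add: power2_eq_square)
qed

lemma R_reindex:
  assumes "inj_on h B"
  shows "R (h ` B) f = R B (f \<circ> h)"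
  using assms by (simp add: R_def sum.reindex card_image)

lemma R_cong:
  assumes "\<And>x. x \<in> A \<Longrightarrow> f x = g x"
  shows "R A f = R A g"
  using assms unfolding R_def by (simp cong: sum.cong)

lemma R_prod:
  assumes "finite A" "finite B"
  shows "R (A \<times> B) (\<lambda>(x,y). u x + v y) = real (card B)^2 * R A u + real (card A)^2 * R B v"
proof -
  have s1: "(\<Sum>z\<in>A\<times>B. (\<lambda>(x,y). u x + v y) z) = real (card B) * sum u A + real (card A) * sum v B"
    by (simp add: sum.cartesian_product[symmetric] sum.distrib sum_distrib_left[symmetric])
  have e: "(\<Sum>z\<in>A\<times>B. ((\<lambda>(x,y). u x + v y) z)^2) = (\<Sum>x\<in>A. \<Sum>y\<in>B. (u x + v y)^2)"
    by (simp add: sum.cartesian_product split_def)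
  have "(\<Sum>x\<in>A. \<Sum>y\<in>B. (u x + v y)^2) = (\<Sum>x\<in>A. \<Sum>y\<in>B. (u x)^2 + 2 * (u x * v y) + (v y)^2)"
    by (intro sum.cong refl) (simp add: power2_eq_square algebra_simps)
  also have "\<dots> = real (card B) * (\<Sum>x\<in>A. (u x)^2)
      + 2 * (sum u A * sum v B) + real (card A) * (\<Sum>y\<in>B. (v y)^2)"
    by (simp add: sum.distrib sum_distrib_left[symmetric] sum_product)
  finally have s2: "(\<Sum>z\<in>A\<times>B. ((\<lambda>(x,y). u x + v y) z)^2) = real (card B) * (\<Sum>x\<in>A. (u x)^2)
      + 2 * (sum u A * sum v B) + real (card A) * (\<Sum>y\<in>B. (v y)^2)" using e by simp
  have True
    by (simp add: sum.cartesian_product[symmetric] power2_sum sum.distrib sum_distrib_left[symmetric]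
        sum_distrib_right[symmetric] mult.assoc)
  show ?thesis unfolding R_def s1 s2 card_cartesian_product
    by (simp add: algebra_simps power2_eq_square)
qed

lemma s1: "(\<Sum>i<N. real i) = real N * (real N - 1) / 2"
  by (induction N) (auto simp: field_simps)

lemma s2: "(\<Sum>i<N. (real i)^2) = real N * (real N - 1) * (2 * real N - 1) / 6"
  by (induction N) (auto simp: field_simps power2_eq_square)

lemma R_range: "R {..<N} real = real N ^2 * (real N ^2 - 1) / 6"
  unfolding R_def s1 s2 by (simp add: field_simps power2_eq_square)

lemma gap:
  assumes "sorted_wrt (<) (xs :: nat list)" "i \<le> j" "j < length xs"
  shows "xs ! i + (j - i) \<le> xs ! j"
  using assms(2,3)
proof (induction j)
  case 0
  then show ?case by simp
next
  case (Suc j)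
  show ?case
  proof (cases "i = Suc j")
    case True
    then show ?thesis by simp
  next
    case False
    then have "i \<le> j" using Suc by simp
    then have "xs ! i + (j - i) \<le> xs ! j" using Suc by simp
    moreover have "xs ! j < xs ! Suc j" using assms(1) Suc.prems
      by (simp add: sorted_wrt_nth_less)
    ultimately show ?thesis using \<open>i \<le> j\<close> by linarith
  qed
qed

lemma sorted_bound:
  assumes "finite (A :: nat set)"
  shows "R A real \<ge> real (card A)^2 * (real (card A)^2 - 1) / 6"
proof -
  obtain xs where xs: "sorted_wrt (<) xs" "set xs = A"
    using ex1_sorted_list_for_set_if_finite[OF assms] by blast
  have d: "distinct xs" using xs(1) strict_sorted_iff by blast
  define N where "N = length xs"
  have cA: "card A = N" using d xs(2) distinct_card N_def by blast
  have img: "A = nth xs ` {..<N}"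
    using xs(2) N_def by (auto simp: set_conv_nth)
  have inj: "inj_on (nth xs) {..<N}" using d N_def by (intro inj_on_nth) auto
  have key: "(real i - real j)^2 \<le> (real (xs!i) - real (xs!j))^2" if "i < N" "j < N" for i j
  proof (cases "i \<le> j")
    case True
    then have "xs ! i + (j - i) \<le> xs ! j" using gap[OF xs(1)] that N_def by simp
    then have "\<bar>real i - real j\<bar> \<le> \<bar>real (xs!i) - real (xs!j)\<bar>" using True by linarith
    then show ?thesis by (simp add: abs_le_square_iff)
  next
    case False
    then have "xs ! j + (i - j) \<le> xs ! i" using gap[OF xs(1)] that N_def by simp
    then have "\<bar>real i - real j\<bar> \<le> \<bar>real (xs!i) - real (xs!j)\<bar>" using False by linarith
    then show ?thesis by (simp add: abs_le_square_iff)
  qed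
  have "R A real = R {..<N} (real \<circ> nth xs)" using img inj R_reindex by metis
  also have "\<dots> = (\<Sum>i<N. \<Sum>j<N. (real (xs!i) - real (xs!j))^2)" by (simp add: Qform o_def)
  also have "\<dots> \<ge> (\<Sum>i<N. \<Sum>j<N. (real i - real j)^2)"
    using key by (intro sum_mono) auto
  also have "(\<Sum>i<N. \<Sum>j<N. (real i - real j)^2) = R {..<N} real" by (simp add: Qform)
  finally show ?thesis unfolding R_range cA .
qed

lemma R_scale: "R A (\<lambda>x. f x * c) = c^2 * R A f"
proof -
  have a: "(\<Sum>x\<in>A. f x * c) = sum f A * c" by (simp add: sum_distrib_right)
  have b: "(\<Sum>x\<in>A. (f x * c)^2) = (\<Sum>x\<in>A. (f x)^2) * c^2"
    by (simp add: sum_distrib_right power_mult_distrib)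
  show ?thesis unfolding R_def a b by (simp add: power_mult_distrib algebra_simps)
qed

lemma V_formula:
  assumes "finite T"
  shows "R (PiE T (\<lambda>_. {..k})) (\<lambda>f. \<Sum>s\<in>T. real (f s) * real s)
     = real ((k+1)^card T)^2 * (real k * (real k + 2) / 6) * (\<Sum>s\<in>T. (real s)^2)"
  using assms
proof (induction T rule: finite_induct)
  case empty
  then show ?case by (simp add: R_def)
next
  case (insert a T)
  define E where "E = PiE T (\<lambda>_. {..k})"
  define \<phi> where "\<phi> = (\<lambda>f. \<Sum>s\<in>T. real (f s) * real s)"
  have fE: "finite E" unfolding E_def using insert by (simp add: finite_PiE)
  have cE: "card E = (k+1)^card T" unfolding E_def using insert by (simp add: card_PiE)
  have E': "PiE (insert a T) (\<lambda>_. {..k}) = (\<lambda>(y, g). g(a := y)) ` ({..k} \<times> E)"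
    unfolding E_def by (rule PiE_insert_eq)
  have inj: "inj_on (\<lambda>(y, g). g(a := y)) ({..k} \<times> E)"
    unfolding E_def using inj_combinator[OF insert(2), of "\<lambda>_. {..k}"] by simp
  have "R (PiE (insert a T) (\<lambda>_. {..k})) (\<lambda>f. \<Sum>s\<in>insert a T. real (f s) * real s)
      = R ({..k} \<times> E) ((\<lambda>f. \<Sum>s\<in>insert a T. real (f s) * real s) \<circ> (\<lambda>(y, g). g(a := y)))"
    unfolding E' using inj by (rule R_reindex)
  also have "\<dots> = R ({..k} \<times> E) (\<lambda>(c,f). real c * real a + \<phi> f)"
  proof (rule R_cong)
    fix x assume "x \<in> {..k} \<times> E"
    obtain c f where x: "x = (c, f)" by fastforce
    have "(\<Sum>s\<in>insert a T. real ((f(a:=c)) s) * real s) = real c * real a + (\<Sum>s\<in>T. real ((f(a:=c)) s) * real s)"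
      using insert by simp
    also have "(\<Sum>s\<in>T. real ((f(a:=c)) s) * real s) = \<phi> f"
      unfolding \<phi>_def using insert(2) by (intro sum.cong) auto
    finally show "((\<lambda>f. \<Sum>s\<in>insert a T. real (f s) * real s) \<circ> (\<lambda>(y, g). g(a := y))) x
        = (\<lambda>(c,f). real c * real a + \<phi> f) x" using x by simp
  qed
  also have "\<dots> = real (card E)^2 * R {..k} (\<lambda>c. real c * real a) + real (card {..k})^2 * R E \<phi>"
    using R_prod[of "{..k}" E "\<lambda>c. real c * real a" \<phi>] fE by simp
  also have "R {..k} (\<lambda>c. real c * real a) = (real a)^2 * R {..<Suc k} real"
    using R_scale[of "{..k}" real "real a"] by (simp add: lessThan_Suc_atMost)
  also have "R E \<phi> = real ((k+1)^card T)^2 * (real k * (real k + 2) / 6) * (\<Sum>s\<in>T. (real s)^2)"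
    using insert.IH unfolding E_def \<phi>_def .
  finally show ?case unfolding R_range cE using insert
    by (simp add: field_simps power2_eq_square)
qed

lemma D_inj:
  assumes D: "D_set k S" and fin: "finite S"
  shows "inj_on (\<lambda>f. \<Sum>s\<in>S. f s * s) (PiE S (\<lambda>_. {..k}))"
proof (rule inj_onI)
  fix f g assume f: "f \<in> PiE S (\<lambda>_. {..k})" and g: "g \<in> PiE S (\<lambda>_. {..k})"
    and eq: "(\<Sum>s\<in>S. f s * s) = (\<Sum>s\<in>S. g s * s)"
  define \<epsilon> where "\<epsilon> = (\<lambda>s. int (f s) - int (g s))"
  have "finite {s \<in> S. \<epsilon> s \<noteq> 0}" using fin by simp
  moreover have "\<forall>s\<in>S. \<bar>\<epsilon> s\<bar> \<le> int k"
    using f g unfolding \<epsilon>_def by (force simp: PiE_iff)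
  moreover have "(\<Sum>s\<in>{s \<in> S. \<epsilon> s \<noteq> 0}. \<epsilon> s * int s) = 0"
  proof -
    have "(\<Sum>s\<in>{s \<in> S. \<epsilon> s \<noteq> 0}. \<epsilon> s * int s) = (\<Sum>s\<in>S. \<epsilon> s * int s)"
      using fin by (simp add: sum.inter_filter) (intro sum.cong, auto)
    also have "\<dots> = int (\<Sum>s\<in>S. f s * s) - int (\<Sum>s\<in>S. g s * s)"
      unfolding \<epsilon>_def by (simp add: sum_subtractf left_diff_distrib)
    finally show ?thesis using eq by simp
  qed
  ultimately have "\<forall>s\<in>S. \<epsilon> s = 0" using D unfolding D_set_def by blast
  then show "f = g" using f g by (intro PiE_ext[OF f g]) (auto simp: \<epsilon>_def)
qed

lemma key:
  assumes D: "D_set k S" and fin: "finite S" and ne: "S \<noteq> {}"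
  shows "real ((k+1)^card S)^2 - 1 \<le> real k * (real k + 2) * real (card S) * real (Max S)^2"
proof -
  define E where "E = PiE S (\<lambda>_. {..k})"
  define \<psi> where "\<psi> = (\<lambda>f. \<Sum>s\<in>S. f s * s)"
  define N where "N = (k+1)^card S"
  have inj: "inj_on \<psi> E" unfolding \<psi>_def E_def using D_inj[OF D fin] .
  have fE: "finite E" unfolding E_def using fin by (simp add: finite_PiE)
  have cE: "card E = N" unfolding E_def N_def using fin by (simp add: card_PiE)
  have c: "card (\<psi> ` E) = N" using inj cE by (simp add: card_image)
  have low: "real N^2 * (real N^2 - 1) / 6 \<le> R (\<psi> ` E) real"
    using sorted_bound[of "\<psi> ` E"] fE c by simp
  have "R (\<psi> ` E) real = R E (real \<circ> \<psi>)" using inj by (rule R_reindex)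
  also have "\<dots> = R E (\<lambda>f. \<Sum>s\<in>S. real (f s) * real s)"
    by (rule R_cong) (simp add: \<psi>_def)
  also have "\<dots> = real N^2 * (real k * (real k + 2) / 6) * (\<Sum>s\<in>S. (real s)^2)"
    unfolding E_def N_def using V_formula[OF fin] by simp
  also have "(\<Sum>s\<in>S. (real s)^2) \<le> real (card S) * real (Max S)^2"
    using sum_bounded_above[of S "\<lambda>s. (real s)^2" "real (Max S)^2"] fin
    by (simp add: power_mono)
  finally have "real N^2 * (real N^2 - 1) / 6 \<le> real N^2 * (real k * (real k + 2) / 6) * (real (card S) * real (Max S)^2)"
    using low by (simp add: mult_left_mono)
  then have "real N^2 * ((real N^2 - 1) / 6) \<le> real N^2 * ((real k * (real k + 2) / 6) * (real (card S) * real (Max S)^2))"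
    by (simp add: mult.assoc)
  moreover have "real N^2 > 0" unfolding N_def by simp
  ultimately have "(real N^2 - 1) / 6 \<le> (real k * (real k + 2) / 6) * (real (card S) * real (Max S)^2)"
    using mult_left_le_imp_le by blast
  then show ?thesis unfolding N_def[symmetric] by (simp add: field_simps)
qed

lemma D_subset:
  assumes "D_set k S" "T \<subseteq> S"
  shows "D_set k T"
  unfolding D_set_def
proof (intro allI impI)
  fix \<epsilon> :: "nat \<Rightarrow> int"
  assume a1: "finite {s \<in> T. \<epsilon> s \<noteq> 0}" and a2: "\<forall>s\<in>T. \<bar>\<epsilon> s\<bar> \<le> int k"
    and a3: "(\<Sum>s\<in>{s \<in> T. \<epsilon> s \<noteq> 0}. \<epsilon> s * int s) = 0"
  define \<epsilon>' where "\<epsilon>' = (\<lambda>s. if s \<in> T then \<epsilon> s else 0)"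
  have e: "{s \<in> S. \<epsilon>' s \<noteq> 0} = {s \<in> T. \<epsilon> s \<noteq> 0}" using assms(2) by (auto simp: \<epsilon>'_def)
  have "(\<Sum>s\<in>{s \<in> S. \<epsilon>' s \<noteq> 0}. \<epsilon>' s * int s) = 0"
    unfolding e using a3 by (simp add: \<epsilon>'_def)
  moreover have "finite {s \<in> S. \<epsilon>' s \<noteq> 0}" unfolding e by (rule a1)
  moreover have "\<forall>s\<in>S. \<bar>\<epsilon>' s\<bar> \<le> int k" using a2 by (simp add: \<epsilon>'_def)
  ultimately have "\<forall>s\<in>S. \<epsilon>' s = 0" using assms(1) unfolding D_set_def by blast
  then show "\<forall>s\<in>T. \<epsilon> s = 0"
  proof (intro ballI)
    fix s assume "\<forall>s\<in>S. \<epsilon>' s = 0" "s \<in> T"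
    then have "\<epsilon>' s = 0" using assms(2) by blast
    then show "\<epsilon> s = 0" using \<open>s \<in> T\<close> by (simp add: \<epsilon>'_def)
  qed
qed

lemma part1:
  assumes k: "k \<ge> 1" and D: "D_set k S" and fin: "finite S" and m: "card S = m" "m \<ge> 1"
  shows "real (Max S) \<ge> (real (k + 1) ^ m / 2) * sqrt (6 / (real m * pi * real k * real (k + 2)))"
proof -
  have ne: "S \<noteq> {}" using m by auto
  define N where "N = real ((k+1)^m)"
  define M where "M = real (Max S)"
  define c where "c = real k * (real k + 2)"
  have kk: "N^2 - 1 \<le> c * real m * M^2"
    using key[OF D fin ne] unfolding N_def M_def c_def m(1) by (simp add: algebra_simps)
  have "(2::real)^m \<le> real (k+1)^m" using k by (intro power_mono) auto
  moreover have "(2::real)^1 \<le> 2^m" using m(2) by (intro power_increasing) auto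
  ultimately have N2: "2 \<le> N" unfolding N_def by simp
  have "2^2 \<le> N^2" using N2 by (intro power_mono) auto
  then have "4 \<le> N^2" by simp
  then have "3/4 * N^2 \<le> c * real m * M^2" using kk by linarith
  have cpos: "c > 0" unfolding c_def using k by simp
  have Dpos: "real m * pi * real k * real (k + 2) = pi * (c * real m)" unfolding c_def by (simp add: algebra_simps)
  have h: "(N/2)^2 * (6 / (real m * pi * real k * real (k + 2))) \<le> M^2"
  proof -
    have cm: "c * real m > 0" using cpos m(2) by simp
    have "(N/2)^2 * 6 = 3/2 * N^2" by (simp add: power2_eq_square)
    also have "\<dots> \<le> 2 * (c * real m * M^2)" using \<open>3/4 * N^2 \<le> c * real m * M^2\<close> by linarith
    also have "\<dots> \<le> pi * (c * real m * M^2)"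
      using pi_ge_two cm by (intro mult_right_mono) auto
    finally have "(N/2)^2 * 6 \<le> M^2 * (pi * (c * real m))" by (simp add: algebra_simps)
    then show ?thesis unfolding Dpos using cm by (simp add: field_simps)
  qed
  have "(N/2) * sqrt (6 / (real m * pi * real k * real (k + 2))) = sqrt ((N/2)^2 * (6 / (real m * pi * real k * real (k + 2))))"
    using N2 by (simp only: real_sqrt_mult real_sqrt_abs)
  also have "\<dots> \<le> sqrt (M^2)" using h by (rule real_sqrt_le_mono)
  also have "\<dots> = M" unfolding M_def by simp
  finally show ?thesis unfolding N_def M_def by simp
qed

lemma part2:
  assumes k: "k \<ge> 1" and D: "D_set k S"
  shows "\<forall>\<^sub>F n in sequentially.
                 real (card (S \<inter> {1..n})) \<le>
                   log (real (k + 1)) (real n)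
                   + 1/2 * log (real (k + 1)) (log 2 (real n))
                   + 1/2 * log (real (k + 1)) (2 * pi / 3 * real k * real (k + 2))"
proof -
  define b where "b = real (k + 1)"
  define c where "c = real k * (real k + 2)"
  define K where "K = 2 * pi / 3 * real k * real (k + 2)"
  define c1 where "c1 = log 2 (4/3 * c)"
  define L where "L = max 1 (c1 / (pi - 3))"
  have b1: "b > 1" and b2: "b \<ge> 2" unfolding b_def using k by auto
  have "real k \<ge> 1" using k by simp
  then have "1 * 3 \<le> real k * (real k + 2)" by (intro mult_mono) auto
  then have cpos: "c \<ge> 3" unfolding c_def by simp
  have KK: "K = 2 * pi / 3 * c" unfolding K_def c_def by simp
  have "2 * 3 \<le> pi * c" using cpos pi_ge_two by (intro mult_mono) auto
  then have Kpos: "K \<ge> 1" unfolding KK by simp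
  have pi3: "pi - 3 > 0" using pi_gt3 by simp
  show ?thesis unfolding eventually_sequentially
  proof (intro exI allI impI)
    fix n assume n: "n \<ge> nat \<lceil>2 powr L\<rceil>"
    have "2 powr L \<le> real n" using n by linarith
    moreover have "2 powr 1 \<le> 2 powr L" unfolding L_def by (intro powr_mono) auto
    ultimately have n2: "real n \<ge> 2" by simp
    define l where "l = log 2 (real n)"
    have lL: "l \<ge> L" unfolding l_def
      using \<open>2 powr L \<le> real n\<close> n2 log_le_cancel_iff[of 2 "2 powr L" "real n"] by simp
    have l1: "l \<ge> 1" using lL unfolding L_def by simp
    have c1l: "c1 \<le> (pi - 3) * l"
    proof -
      have "c1 / (pi - 3) \<le> l" using lL unfolding L_def by simp
      then show ?thesis using pi3 by (simp add: pos_divide_le_eq mult.commute)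
    qed
    define T where "T = S \<inter> {1..n}"
    define m where "m = card T"
    have finT: "finite T" unfolding T_def by simp
    have DT: "D_set k T" using D_subset[OF D] unfolding T_def by blast
    have mn: "m \<le> n" unfolding m_def T_def using card_mono[of "{1..n}" "S \<inter> {1..n}"] by simp
    have rhs: "log b (real n) + 1/2 * log b l + 1/2 * log b K = 1/2 * log b (real n ^ 2 * l * K)"
      using n2 l1 Kpos b1 by (simp add: log_mult log_nat_power algebra_simps)
    have goal: "real m \<le> 1/2 * log b (real n ^ 2 * l * K)"
    proof (cases "m = 0")
      case True
      have "1 \<le> real n ^ 2" using n2 by (simp add: one_le_power)
      then have "1 * 1 * 1 \<le> real n ^ 2 * l * K" using l1 Kpos by (intro mult_mono) auto
      then have "0 \<le> log b (real n ^ 2 * l * K)" using b1 by simp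
      then show ?thesis using True by simp
    next
      case False
      have ne: "T \<noteq> {}" using False unfolding m_def by auto
      have MT: "Max T \<le> n" using finT ne unfolding T_def by (auto simp: Max_le_iff)
      define B where "B = b ^ (2 * m)"
      have kk: "B - 1 \<le> c * real m * real (Max T)^2"
        using key[OF DT finT ne] unfolding B_def b_def c_def m_def by (simp add: power_mult algebra_simps)
      have "real (Max T)^2 \<le> real n ^2" using MT by (intro power_mono) auto
      then have "c * real m * real (Max T)^2 \<le> c * real m * real n ^2" using cpos by (intro mult_left_mono) auto
      have B4: "(2::real) ^ (2 * m) \<le> B" unfolding B_def using b2 by (intro power_mono) auto
      moreover have "(2::real) ^ 2 \<le> 2 ^ (2 * m)" using False by (intro power_increasing) auto
      ultimately have "4 \<le> B" by simp
      then have Bb: "B \<le> 4/3 * c * real m * real n ^ 2"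
        using kk \<open>c * real m * real (Max T)^2 \<le> c * real m * real n ^2\<close> by linarith
      have "4/3 * c * real m * real n ^ 2 \<le> 4/3 * c * real n * real n ^ 2"
        using mn cpos by (intro mult_right_mono mult_left_mono) auto
      then have "(2::real) ^ (2 * m) \<le> 4/3 * c * real n ^ 3" using B4 Bb
        by (simp add: power2_eq_square power3_eq_cube mult.assoc)
      then have "log 2 ((2::real) ^ (2 * m)) \<le> log 2 (4/3 * c * real n ^ 3)"
        using cpos n2 by (subst log_le_cancel_iff) auto
      also have "log 2 (4/3 * c * real n ^ 3) = c1 + 3 * l"
      proof -
        have "log 2 ((4/3 * c) * real n ^ 3) = log 2 (4/3 * c) + log 2 (real n ^ 3)"
          using cpos n2 by (intro log_mult_pos) auto
        then show ?thesis unfolding c1_def l_def using n2 by (simp add: log_nat_power)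
      qed
      finally have "2 * real m \<le> c1 + 3 * l" by simp
      then have mpi: "real m \<le> pi / 2 * l" using c1l by (simp add: algebra_simps)
      have "B \<le> 4/3 * c * (pi / 2 * l) * real n ^ 2"
      proof -
        have "4/3 * c * real m * real n ^ 2 \<le> 4/3 * c * (pi / 2 * l) * real n ^ 2"
          using mpi cpos by (intro mult_right_mono mult_left_mono) auto
        then show ?thesis using Bb by linarith
      qed
      also have "\<dots> = real n ^ 2 * l * K" unfolding KK by (simp add: algebra_simps)
      finally have BB: "B \<le> real n ^ 2 * l * K" .
      have Bpos: "B > 0" unfolding B_def using b1 by simp
      have "log b B \<le> log b (real n ^ 2 * l * K)"
        using b1 Bpos BB by (subst log_le_cancel_iff) auto
      moreover have "log b B = 2 * real m" unfolding B_def using b1 by simp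
      ultimately show ?thesis by simp
    qed
    show "real (card (S \<inter> {1..n})) \<le>
                   log (real (k + 1)) (real n)
                   + 1/2 * log (real (k + 1)) (log 2 (real n))
                   + 1/2 * log (real (k + 1)) (2 * pi / 3 * real k * real (k + 2))"
      using goal rhs unfolding b_def[symmetric] K_def[symmetric] l_def[symmetric] m_def T_def by simp
  qed
qed


theorem theorem6:
  fixes k :: nat
  assumes "k \<ge> 1"
  shows "(\<exists>g :: nat \<Rightarrow> real. g \<longlonglongrightarrow> 0 \<and>
            (\<forall>\<^sub>F m in sequentially. \<forall>S. D_set k S \<and> finite S \<and> card S = m \<longrightarrow>
               real (Max S) \<ge> (1 + g m) * (real (k + 1) ^ m / 2) *
                 sqrt (6 / (real m * pi * real k * real (k + 2)))))
       \<and> (\<forall>S. D_set k S \<and> infinite S \<longrightarrow>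
            (\<exists>g :: nat \<Rightarrow> real. g \<longlonglongrightarrow> 0 \<and>
              (\<forall>\<^sub>F n in sequentially.
                 real (card (S \<inter> {1..n})) \<le>
                   log (real (k + 1)) (real n)
                   + 1/2 * log (real (k + 1)) (log 2 (real n))
                   + 1/2 * log (real (k + 1)) (2 * pi / 3 * real k * real (k + 2))
                   + g n)))"
proof (intro conjI allI impI)
  show "\<exists>g :: nat \<Rightarrow> real. g \<longlonglongrightarrow> 0 \<and>
            (\<forall>\<^sub>F m in sequentially. \<forall>S. D_set k S \<and> finite S \<and> card S = m \<longrightarrow>
               real (Max S) \<ge> (1 + g m) * (real (k + 1) ^ m / 2) *
                 sqrt (6 / (real m * pi * real k * real (k + 2))))"
  proof (intro exI conjI)
    show "(\<lambda>_. 0::real) \<longlonglongrightarrow> 0" by simp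
    show "\<forall>\<^sub>F m in sequentially. \<forall>S. D_set k S \<and> finite S \<and> card S = m \<longrightarrow>
               real (Max S) \<ge> (1 + (\<lambda>_. 0::real) m) * (real (k + 1) ^ m / 2) *
                 sqrt (6 / (real m * pi * real k * real (k + 2)))"
      unfolding eventually_sequentially
    proof (intro exI[of _ 1] allI impI)
      fix m :: nat and S :: "nat set"
      assume m: "1 \<le> m" and S: "D_set k S \<and> finite S \<and> card S = m"
      then show "real (Max S) \<ge> (1 + (\<lambda>_. 0::real) m) * (real (k + 1) ^ m / 2) *
                 sqrt (6 / (real m * pi * real k * real (k + 2)))"
        using part1[OF assms, of S m] by simp
    qed
  qed
next
  fix S assume S: "D_set k S \<and> infinite S"
  show "\<exists>g :: nat \<Rightarrow> real. g \<longlonglongrightarrow> 0 \<and>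
              (\<forall>\<^sub>F n in sequentially.
                 real (card (S \<inter> {1..n})) \<le>
                   log (real (k + 1)) (real n)
                   + 1/2 * log (real (k + 1)) (log 2 (real n))
                   + 1/2 * log (real (k + 1)) (2 * pi / 3 * real k * real (k + 2))
                   + g n)"
  proof (intro exI[of _ "\<lambda>_. 0"] conjI)
    show "(\<lambda>_. 0::real) \<longlonglongrightarrow> 0" by simp
    show "\<forall>\<^sub>F n in sequentially.
                 real (card (S \<inter> {1..n})) \<le>
                   log (real (k + 1)) (real n)
                   + 1/2 * log (real (k + 1)) (log 2 (real n))
                   + 1/2 * log (real (k + 1)) (2 * pi / 3 * real k * real (k + 2))
                   + (\<lambda>_. 0::real) n"
      using part2[OF assms, of S] S by simp
  qed
qed

end
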